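(* Let $D$ be a demicap in $AG(4,3)$ with anchor point $a$. Then among the $71$ points of $AG(4,3)\setminus D$: the anchor point $a$ completes exactly five lines with pairs of points of $D$; exactly $40$ points complete exactly one line with a pair of points of $D$; and the remaining $30$ points complete no line with a pair of points of $D$.
   Context: $AG(4,3)$ is the affine space $\mathbb{F}_3^4$; a line is a set of three distinct points $\{x,y,z\}$ with $x+y+z=0$. A cap is a set of points containing no line. A hyperplane is a $3$-dimensional affine subspace of $\mathbb{F}_3^4$; a set of points is co-hyperplanar if it lies in a common hyperplane. For a point $a$, an $a$-line is a pair of points $\{b,c\}$ such that $\{a,b,c\}$ is a line. A demicap with anchor point $a$ is a cap consisting of the $10$ points of five $a$-lines such that no four of these five $a$-lines are co-hyperplanar. For a set $S$ and a point $p\notin S$, $p$ completes a line with a pair of points of $S$ if there are distinct $x,y\in S$ with $\{p,x,y\}$ a line; the number of lines $p$ completes with $S$ is the number of such unordered pairs $\{x,y\}$. *)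

theory Defs
  imports "HOL-Analysis.Finite_Cartesian_Product" "HOL-Library.Numeral_Type"
begin

text \<open>Points of AG(4,3) are vectors in F_3^4, modelled as the type 3 ^ 4
  (the numeral type 3 is the ring Z/3Z).\<close>

type_synonym pt = "3 ^ 4"

definition is_line :: "pt set \<Rightarrow> bool" where
  "is_line L \<longleftrightarrow> (\<exists>x y z. L = {x, y, z} \<and> x \<noteq> y \<and> y \<noteq> z \<and> x \<noteq> z \<and> x + y + z = 0)"

definition cap :: "pt set \<Rightarrow> bool" where
  "cap S \<longleftrightarrow> \<not> (\<exists>L. L \<subseteq> S \<and> is_line L)"

definition hyperplane :: "pt set \<Rightarrow> bool" where
  "hyperplane H \<longleftrightarrow> (\<exists>(u::pt) (c::3). u \<noteq> 0 \<and> H = {x. (\<Sum>i\<in>UNIV. u $ i * x $ i) = c})"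

definition cohyperplanar :: "pt set \<Rightarrow> bool" where
  "cohyperplanar S \<longleftrightarrow> (\<exists>H. hyperplane H \<and> S \<subseteq> H)"

definition a_line :: "pt \<Rightarrow> pt set \<Rightarrow> bool" where
  "a_line a P \<longleftrightarrow> (\<exists>b c. P = {b, c} \<and> b \<noteq> c \<and> is_line {a, b, c})"

definition demicap :: "pt set \<Rightarrow> pt \<Rightarrow> bool" where
  "demicap D a \<longleftrightarrow> cap D \<and> card D = 10 \<and>
     (\<exists>Ls. card Ls = 5 \<and> (\<forall>P\<in>Ls. a_line a P) \<and> D = \<Union>Ls \<and>
        (\<forall>Fs. Fs \<subseteq> Ls \<and> card Fs = 4 \<longrightarrow> \<not> cohyperplanar (\<Union>Fs)))"

definition lines_completed :: "pt \<Rightarrow> pt set \<Rightarrow> nat" where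
  "lines_completed p S = card {P. P \<subseteq> S \<and> a_line p P}"

end

theory Submission
  imports Defs "HOL-Library.FuncSet"
begin
lemma three0: "(3::3) = 0" by simp
lemma three3: "(z::3) + z + z = 0"
proof -
  have "z + z + z = 3 * z" by simp
  also have "\<dots> = 0" by (simp only: three0) simp
  finally show ?thesis .
qed
lemma three: "(x::pt) + x + x = 0"
  unfolding vec_eq_iff by (simp only: vector_add_component zero_index three3 simp_thms)
lemma negneg: "-a - a = (a::pt)"
proof -
  have "-a - a = -a - a + (a + a + a)" by (simp only: three add_0_right)
  also have "\<dots> = a" by (simp add: algebra_simps)
  finally show ?thesis .
qed
lemma partner_diff: "(-a - x) - a = -(x - (a::pt))"
proof -
  have "(-a - x) - a = (-a - a) - x" by (simp add: algebra_simps)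
  then show ?thesis by (simp add: negneg)
qed
definition dot :: "pt \<Rightarrow> pt \<Rightarrow> 3" where "dot u x = (\<Sum>i\<in>UNIV. u $ i * x $ i)"

lemma dot_add: "dot u (x + y) = dot u x + dot u y"
  by (simp add: dot_def algebra_simps sum.distrib)
lemma dot_minus: "dot u (- x) = - dot u x"
  by (simp add: dot_def sum_negf)
lemma dot_diff: "dot u (x - y) = dot u x - dot u y"
  by (simp add: dot_def algebra_simps sum_subtractf)
lemma dot_diff_left: "dot (u - v) x = dot u x - dot v x"
  by (simp add: dot_def algebra_simps sum_subtractf)

lemma is_line_iff: "is_line {p, b, c} \<longleftrightarrow> p \<noteq> b \<and> b \<noteq> c \<and> p \<noteq> c \<and> p + b + c = 0"
proof
  assume "is_line {p, b, c}"
  then obtain x y z where e: "{p,b,c} = {x,y,z}" and d: "x \<noteq> y" "y \<noteq> z" "x \<noteq> z" and s: "x + y + z = 0"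
    unfolding is_line_def by blast
  have "card {p,b,c} = 3" using e d by simp
  then have dd: "p \<noteq> b \<and> b \<noteq> c \<and> p \<noteq> c" by (auto simp: card_insert_if split: if_splits)
  have "sum id {p,b,c} = sum id {x,y,z}" using e by simp
  then have "p + b + c = 0" using d dd s by (simp add: add.assoc)
  then show "p \<noteq> b \<and> b \<noteq> c \<and> p \<noteq> c \<and> p + b + c = 0" using dd by simp
next
  assume "p \<noteq> b \<and> b \<noteq> c \<and> p \<noteq> c \<and> p + b + c = 0"
  then show "is_line {p, b, c}" unfolding is_line_def by blast
qed

lemma a_line_iff: "a_line p P \<longleftrightarrow> (\<exists>b c. P = {b,c} \<and> b \<noteq> c \<and> p \<noteq> b \<and> p \<noteq> c \<and> p + b + c = 0)"
  unfolding a_line_def is_line_iff by blast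

lemma a_line_partner:
  assumes "a_line p P" "x \<in> P"
  shows "P = {x, -p-x} \<and> x \<noteq> p \<and> -p-x \<noteq> x"
proof -
  obtain b c where h: "P = {b,c}" "b \<noteq> c" "p \<noteq> b" "p \<noteq> c" "p + b + c = 0"
    using assms(1) a_line_iff by blast
  have c: "c = -p-b" using h(5) by (simp add: algebra_simps eq_neg_iff_add_eq_0 add.assoc)
  have b: "b = -p-c" using c by simp
  from assms(2) h(1) have "x = b \<or> x = c" by blast
  then show ?thesis
  proof
    assume "x = b" then show ?thesis using h(1-3) c by auto
  next
    assume "x = c" then show ?thesis using h(1,2,4) b by auto
  qed
qed


lemma tool:
  assumes G: "\<forall>Q\<in>G. \<exists>x. Q = {x, -a-x}" "finite G" "card G = 4" "\<not> cohyperplanar (\<Union>G)"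
    and P: "P \<in> G" "z \<in> P"
  shows "\<exists>u. dot u (z - a) = 1 \<and> (\<forall>Q\<in>G. Q \<noteq> P \<longrightarrow> (\<forall>w\<in>Q. dot u (w - a) = 0))"
proof -
  define r where "r Q = (if Q = P then z else (SOME b. b \<in> Q))" for Q
  have rQ: "r Q \<in> Q" if QG: "Q \<in> G" for Q
  proof -
    obtain x where "Q = {x, -a-x}" using G(1) QG by blast
    then have "\<exists>b. b \<in> Q" by blast
    show ?thesis
    proof (cases "Q = P")
      case True then show ?thesis unfolding r_def using P(2) by simp
    next
      case False then show ?thesis unfolding r_def using someI_ex[OF \<open>\<exists>b. b \<in> Q\<close>] by simp
    qed
  qed
  have wQ: "w - a = r Q - a \<or> w - a = -(r Q - a)" if QG: "Q \<in> G" "w \<in> Q" for Q w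
  proof -
    obtain x where x: "Q = {x, -a-x}" using G(1) QG(1) by blast
    have "r Q \<in> Q" using rQ that by blast
    then show ?thesis using that x partner_diff[of a x] by auto
  qed
  define f where "f u = (\<lambda>Q\<in>G. dot u (r Q - a))" for u
  have orth: "dot u (w - a) = 0" if QG: "Q \<in> G" "w \<in> Q" "dot u (r Q - a) = 0" for u Q w
  proof -
    have "w - a = r Q - a \<or> w - a = -(r Q - a)" using wQ[OF QG(1,2)] .
    then show ?thesis
    proof
      assume h: "w - a = r Q - a" show ?thesis unfolding h by (rule QG(3))
    next
      assume h: "w - a = -(r Q - a)" show ?thesis unfolding h dot_minus QG(3) by simp
    qed
  qed
  have "inj f"
  proof (rule injI, rule ccontr)
    fix u v assume e: "f u = f v" and ne: "u \<noteq> v"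
    define d where "d = u - v"
    have d0: "d \<noteq> 0" using ne d_def by simp
    have "dot d (r Q - a) = 0" if "Q \<in> G" for Q
    proof -
      have "f u Q = f v Q" using e by simp
      then show ?thesis using that by (simp add: f_def d_def dot_diff_left)
    qed
    then have dw: "dot d (w - a) = 0" if "w \<in> \<Union>G" for w
      using that orth by blast
    have "hyperplane {x. (\<Sum>i\<in>UNIV. d $ i * x $ i) = dot d a}"
      unfolding hyperplane_def using d0 by blast
    moreover have "\<Union>G \<subseteq> {x. (\<Sum>i\<in>UNIV. d $ i * x $ i) = dot d a}"
      using dw by (auto simp: dot_diff simp flip: dot_def)
    ultimately have "cohyperplanar (\<Union>G)" unfolding cohyperplanar_def by blast
    then show False using G(4) by blast
  qed
  have sub: "range f \<subseteq> PiE G (\<lambda>_. UNIV)" unfolding f_def by auto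
  have c1: "card (range f) = 81" using \<open>inj f\<close> by (simp add: card_image)
  have c2: "card (PiE G (\<lambda>_. UNIV :: 3 set)) = 81" using G(2,3) by (simp add: card_PiE)
  have "range f = PiE G (\<lambda>_. UNIV)"
    using card_subset_eq[OF _ sub] c1 c2 G(2) by (simp add: finite_PiE)
  moreover have "(\<lambda>Q\<in>G. if Q = P then 1 else 0) \<in> PiE G (\<lambda>_. UNIV :: 3 set)" by auto
  ultimately obtain u where u: "f u = (\<lambda>Q\<in>G. if Q = P then 1 else 0)" by (metis rangeE)
  have "dot u (z - a) = 1"
  proof -
    have "f u P = 1" using u P(1) by simp
    then show ?thesis using P(1) by (simp add: f_def r_def)
  qed
  moreover have "\<forall>Q\<in>G. Q \<noteq> P \<longrightarrow> (\<forall>w\<in>Q. dot u (w - a) = 0)"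
  proof (intro ballI impI)
    fix Q w assume "Q \<in> G" "Q \<noteq> P" "w \<in> Q"
    have "f u Q = 0" using u \<open>Q \<in> G\<close> \<open>Q \<noteq> P\<close> by simp
    then have "dot u (r Q - a) = 0" using \<open>Q \<in> G\<close> by (simp add: f_def)
    then show "dot u (w - a) = 0" using orth \<open>Q \<in> G\<close> \<open>w \<in> Q\<close> by blast
  qed
  ultimately show ?thesis by blast
qed

lemma Lof:
  assumes "\<forall>P\<in>Ls. a_line a P" "D = \<Union>Ls" "w \<in> D"
  shows "{w, -a-w} \<in> Ls \<and> w \<noteq> a \<and> -a-w \<noteq> w"
proof -
  obtain P where "P \<in> Ls" "w \<in> P" using assms by blast
  then show ?thesis using a_line_partner[of a P w] assms(1) by auto
qed

lemma keyK:
  assumes Ls: "\<forall>P\<in>Ls. a_line a P" "finite Ls" "card Ls = 5" "D = \<Union>Ls"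
    and ND: "\<forall>Fs. Fs \<subseteq> Ls \<and> card Fs = 4 \<longrightarrow> \<not> cohyperplanar (\<Union>Fs)"
    and xs: "x \<in> D" "y \<in> D" "x' \<in> D" "y' \<in> D" "{x,y} \<notin> Ls" "x' \<noteq> y'" "x + y = x' + y'" "x \<noteq> y"
  shows "x \<in> {x', y'}"
proof (rule ccontr)
  assume nx: "x \<notin> {x', y'}"
  define L where "L w = {w, -a-w}" for w
  have LL: "L w \<in> Ls" "w \<in> L w" if "w \<in> D" for w using Lof[OF Ls(1,4) that] L_def by auto
  define F where "F = {L x, L y, L x', L y'}"
  have FL: "F \<subseteq> Ls" using LL xs F_def by auto
  have cF: "card F \<le> 4" unfolding F_def by (rule card_insert_le_m1; simp add: card_insert_le_m1)+
  have fF: "finite F" unfolding F_def by simp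
  have "4 - card F \<le> card (Ls - F)" using FL cF Ls(2,3) by (simp add: card_Diff_subset fF)
  then obtain T where T: "T \<subseteq> Ls - F" "card T = 4 - card F" "finite T"
    using obtain_subset_with_card_n by blast
  define G where "G = F \<union> T"
  have GL: "G \<subseteq> Ls" using T FL G_def by auto
  have "F \<inter> T = {}" using T by auto
  then have cG: "card G = 4" unfolding G_def using T cF card_Un_disjoint[OF fF T(3)] by simp
  have fG: "finite G" using GL Ls(2) finite_subset by blast
  have Gs: "\<forall>Q\<in>G. \<exists>x. Q = {x, -a-x}"
  proof
    fix Q assume "Q \<in> G"
    then have "a_line a Q" using GL Ls(1) by blast
    then obtain b c where "Q = {b,c}" using a_line_iff by blast
    then show "\<exists>x. Q = {x, -a-x}" using a_line_partner[OF \<open>a_line a Q\<close>, of b] by blast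
  qed
  have ncG: "\<not> cohyperplanar (\<Union>G)" using ND GL cG by blast
  have LxG: "L x \<in> G" "x \<in> L x" using G_def F_def LL xs by auto
  obtain u where u1: "dot u (x - a) = 1" and u0: "\<forall>Q\<in>G. Q \<noteq> L x \<longrightarrow> (\<forall>w\<in>Q. dot u (w - a) = 0)"
    using tool[OF Gs fG cG ncG LxG] by blast
  have val: "dot u (w - a) = 0 \<or> (w = -a-x \<and> dot u (w - a) = -1)" if "w \<in> {y, x', y'}" "w \<noteq> x" for w
  proof (cases "w \<in> L x")
    case True
    then have "w = -a-x" using that(2) L_def by auto
    then have wm: "w - a = -(x - a)" using partner_diff[of a x] by (simp only:)
    have "dot u (w - a) = -1" unfolding wm dot_minus u1 by (rule refl)
    then show ?thesis using \<open>w = -a-x\<close> by blast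
  next
    case False
    have "w \<in> D" using that xs by auto
    then have "L w \<in> G" "w \<in> L w" "L w \<noteq> L x" using LL G_def F_def that(1) False by auto
    then show ?thesis using u0 by blast
  qed
  have "y \<noteq> x" "y \<noteq> -a-x"
  proof -
    show "y \<noteq> -a-x" using xs(5) LL(1)[OF xs(1)] L_def by auto
    show "y \<noteq> x" using xs(8) by simp
  qed
  then have uy: "dot u (y - a) = 0" using val[of y] by auto
  have "dot u ((x - a) + (y - a)) = dot u ((x' - a) + (y' - a))"
    using xs(7) by (simp add: algebra_simps)
  then have eq: "1 = dot u (x' - a) + dot u (y' - a)" unfolding dot_add u1 uy by simp
  have vx: "dot u (x' - a) = 0 \<or> (x' = -a-x \<and> dot u (x' - a) = -1)" using val[of x'] nx by auto
  have vy: "dot u (y' - a) = 0 \<or> (y' = -a-x \<and> dot u (y' - a) = -1)" using val[of y'] nx by auto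
  show False using vx vy eq xs(6) by auto
qed

lemma alg1: "(p::pt) + b + (-a - b) = p - a" by (simp add: algebra_simps)

theorem corollary3p5:
  fixes D :: "pt set" and a :: pt
  assumes "demicap D a"
  shows "card (UNIV - D) = 71 \<and> a \<notin> D \<and> lines_completed a D = 5
    \<and> card {p. p \<notin> D \<and> lines_completed p D = 1} = 40
    \<and> card {p. p \<notin> D \<and> lines_completed p D = 0} = 30"
proof -
  have capD: "cap D" and cD: "card D = 10" using assms unfolding demicap_def by auto
  obtain Ls where cLs: "card Ls = 5" and hLs: "\<forall>P\<in>Ls. a_line a P" and DL: "D = \<Union>Ls"
    and ND: "\<forall>Fs. Fs \<subseteq> Ls \<and> card Fs = 4 \<longrightarrow> \<not> cohyperplanar (\<Union>Fs)"
    using assms unfolding demicap_def by blast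
  have fLs: "finite Ls" using cLs card_ge_0_finite by fastforce
  have fD: "finite D" using cD card_ge_0_finite by fastforce
  have aD: "a \<notin> D" using Lof[OF hLs DL] by blast
  have c71: "card (UNIV - D) = 71" using fD cD by (simp add: card_Diff_subset)
  define S where "S p = {P. P \<subseteq> D \<and> a_line p P}" for p
  have lcS: "lines_completed p D = card (S p)" for p unfolding lines_completed_def S_def by simp
  have SaL: "S a = Ls"
  proof
    show "S a \<subseteq> Ls"
    proof
      fix P assume "P \<in> S a"
      then have P: "P \<subseteq> D" "a_line a P" unfolding S_def by auto
      then obtain b c where "P = {b,c}" using P(2) unfolding a_line_iff by blast
      then have "b \<in> P" "b \<in> D" using P by auto
      then have "P = {b, -a-b}" "{b, -a-b} \<in> Ls" using a_line_partner[OF P(2)] Lof[OF hLs DL] by auto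
      then show "P \<in> Ls" by simp
    qed
    show "Ls \<subseteq> S a" using hLs DL unfolding S_def by auto
  qed
  have lca: "lines_completed a D = 5" using lcS SaL cLs by simp
  define N where "N = {P. P \<subseteq> D \<and> card P = 2} - Ls"
  have LN: "Ls \<subseteq> {P. P \<subseteq> D \<and> card P = 2}"
  proof
    fix P assume "P \<in> Ls"
    then have "a_line a P" using hLs by blast
    then obtain b c where "P = {b,c}" "b \<noteq> c" unfolding a_line_iff by blast
    then show "P \<in> {P. P \<subseteq> D \<and> card P = 2}" using \<open>P \<in> Ls\<close> DL by auto
  qed
  have cN: "card N = 40" unfolding N_def
    using card_Diff_subset[OF fLs LN] n_subsets[OF fD, of 2] cD cLs by (simp add: choose_two)
  define t where "t P = - sum id P" for P :: "pt set"
  have Nform: "\<exists>b c. P = {b,c} \<and> b \<noteq> c \<and> b \<in> D \<and> c \<in> D \<and> t P = -(b+c) \<and> {b,c} \<notin> Ls" if "P \<in> N" for P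
  proof -
    have "card P = 2" "P \<subseteq> D" "P \<notin> Ls" using that N_def by auto
    then obtain b c where "P = {b,c}" "b \<noteq> c" by (meson card_2_iff)
    then show ?thesis using \<open>P \<subseteq> D\<close> \<open>P \<notin> Ls\<close> t_def by auto
  qed
  
  have tN: "t P \<notin> D \<and> t P \<noteq> a" if PN: "P \<in> N" for P
  proof -
    obtain b c where bc: "P = {b,c}" "b \<noteq> c" "b \<in> D" "c \<in> D" "t P = -(b+c)" "{b,c} \<notin> Ls"
      using Nform[OF PN] by blast
    have s: "t P + b + c = 0" using bc(5) by simp
    have "t P \<noteq> b"
    proof
      assume "t P = b"
      then have "b + b + c = 0" using s by simp
      then have "c = b" using three[of b] by (metis add.commute add_left_cancel)
      then show False using bc(2) by simp
    qed
    moreover have "t P \<noteq> c"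
    proof
      assume "t P = c"
      then have "c + b + c = 0" using s by simp
      then have "b = c" using three[of c] by (metis add.commute add.left_commute add_left_cancel)
      then show False using bc(2) by simp
    qed
    ultimately have "is_line {t P, b, c}" using bc(2) s is_line_iff by blast
    have "t P \<notin> D"
    proof
      assume "t P \<in> D"
      then have "{t P, b, c} \<subseteq> D" using bc(3,4) by simp
      then show False using capD \<open>is_line {t P, b, c}\<close> unfolding cap_def by blast
    qed
    moreover have "t P \<noteq> a"
    proof
      assume "t P = a"
      then have "a + b + c = 0" using s by (simp only:)
      moreover have "a \<noteq> b" "a \<noteq> c" using aD bc(3,4) by blast+
      ultimately have "a_line a P" unfolding a_line_iff using bc(1,2) by blast
      then have "P \<in> S a" using bc unfolding S_def by auto
      then show False using SaL bc by simp
    qed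
    ultimately show ?thesis by blast
  qed
  have injt: "inj_on t N"
  proof
    fix P Q assume P: "P \<in> N" and Q: "Q \<in> N" and e: "t P = t Q"
    obtain b c where bc: "P = {b,c}" "b \<noteq> c" "b \<in> D" "c \<in> D" "t P = -(b+c)" "{b,c} \<notin> Ls"
      using Nform[OF P] by blast
    obtain b' c' where bc': "Q = {b',c'}" "b' \<noteq> c'" "b' \<in> D" "c' \<in> D" "t Q = -(b'+c')" "{b',c'} \<notin> Ls"
      using Nform[OF Q] by blast
    have "-(b + c) = -(b' + c')" using e bc(5) bc'(5) by (simp only:)
    then have eq: "b + c = b' + c'" by (simp only: neg_equal_iff_equal)
    have "b \<in> {b', c'}" using keyK[OF hLs fLs cLs DL ND bc(3,4) bc'(3,4) bc(6) bc'(2) eq bc(2)] .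
    then show "P = Q"
    proof
      assume "b = b'" then have "c = c'" using eq by (metis add_left_cancel)
      then show ?thesis using bc(1) bc'(1) \<open>b = b'\<close> by (simp only:)
    next
      assume "b \<in> {c'}" then have "b = c'" by simp
      then have "c = b'" using eq by (metis add.commute add_left_cancel)
      then show ?thesis using bc(1) bc'(1) \<open>b = c'\<close> by (metis insert_commute)
    qed
  qed
  have Schar: "S p = {P \<in> N. t P = p}" if pp: "p \<notin> D" "p \<noteq> a" for p
  proof
    show "S p \<subseteq> {P \<in> N. t P = p}"
    proof
      fix P assume "P \<in> S p"
      then have P: "P \<subseteq> D" "a_line p P" unfolding S_def by auto
      then obtain b c where bc: "P = {b,c}" "b \<noteq> c" "p + b + c = 0" using P(2) unfolding a_line_iff by blast
      have "P \<notin> Ls"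
      proof
        assume "P \<in> Ls"
        then have "a_line a P" using hLs by blast
        then have "P = {b, -a-b}" using a_line_partner[of a P b] bc(1) by blast
        then have "c \<in> {b, -a-b}" using bc(1) by blast
        then have "c = -a-b" using bc(2) by blast
        then have "p + b + (-a - b) = 0" using bc(3) by (simp only:)
        then have "p = a" unfolding alg1 by simp
        then show False using pp(2) by blast
      qed
      moreover have "card P = 2" using bc(1,2) by (metis card_2_iff)
      moreover have "-(b+c) = p" using bc(3) by (metis add.assoc add.commute neg_eq_iff_add_eq_0)
      moreover have "sum id P = b + c" using bc(1,2) by simp
      ultimately have "card P = 2" "P \<notin> Ls" "t P = p" unfolding t_def by simp_all
      then show "P \<in> {P \<in> N. t P = p}" unfolding N_def using P(1) by blast
    qed
    show "{P \<in> N. t P = p} \<subseteq> S p"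
    proof
      fix P assume "P \<in> {P \<in> N. t P = p}"
      then have P: "P \<in> N" "t P = p" by auto
      obtain b c where bc: "P = {b,c}" "b \<noteq> c" "b \<in> D" "c \<in> D" "t P = -(b+c)"
        using Nform[OF P(1)] by blast
      have "p + b + c = 0" using bc(5) P(2) by (metis add.assoc add.commute neg_eq_iff_add_eq_0)
      then have "a_line p P" unfolding a_line_iff using bc pp by blast
      then show "P \<in> S p" using bc unfolding S_def by auto
    qed
  qed
  define T where "T = {p. p \<notin> D \<and> lines_completed p D = 1}"
  have TtN: "T = t ` N"
  proof
    show "T \<subseteq> t ` N"
    proof
      fix p assume "p \<in> T"
      then have p: "p \<notin> D" "card (S p) = 1" using T_def lcS by auto
      then have "p \<noteq> a" using SaL cLs by auto
      obtain P where "S p = {P}" using p(2) card_1_singletonE by blast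
      then have "P \<in> N" "t P = p" using Schar[OF p(1) \<open>p \<noteq> a\<close>] by auto
      then show "p \<in> t ` N" by blast
    qed
    show "t ` N \<subseteq> T"
    proof
      fix p assume "p \<in> t ` N"
      then obtain P where P: "P \<in> N" "p = t P" by blast
      have np: "p \<notin> D" "p \<noteq> a" using tN P by auto
      have "S p = {P}" using Schar[OF np] P injt by (auto simp: inj_on_def)
      then show "p \<in> T" using np lcS T_def by simp
    qed
  qed
  have cT: "card T = 40" using TtN card_image[OF injt] cN by simp
  define Z where "Z = {p. p \<notin> D \<and> lines_completed p D = 0}"
  have aT: "a \<notin> T" using T_def lca by simp
  have ZZ: "Z = (UNIV - D) - insert a T"
  proof
    show "Z \<subseteq> (UNIV - D) - insert a T"
    proof
      fix p assume "p \<in> Z"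
      then have "p \<notin> D" "lines_completed p D = 0" unfolding Z_def by blast+
      moreover have "p \<noteq> a"
      proof
        assume "p = a"
        then have "lines_completed a D = 0" using \<open>lines_completed p D = 0\<close> by (simp only:)
        then show False using lca by (simp only: zero_neq_numeral)
      qed
      moreover have "lines_completed p D \<noteq> 1" using \<open>lines_completed p D = 0\<close> by (simp only: zero_neq_one simp_thms)
      then have "p \<notin> T" unfolding T_def by blast
      ultimately show "p \<in> (UNIV - D) - insert a T" by blast
    qed
    show "(UNIV - D) - insert a T \<subseteq> Z"
    proof
      fix p assume "p \<in> (UNIV - D) - insert a T"
      then have p: "p \<notin> D" "p \<noteq> a" "p \<notin> T" by blast+
      have "S p = {}"
      proof (rule ccontr)
        assume "S p \<noteq> {}"
        then obtain P where "P \<in> S p" by blast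
        then have "P \<in> N" "t P = p" using Schar[OF p(1,2)] by blast+
        then show False using p(3) TtN by blast
      qed
      then have "lines_completed p D = 0" using lcS by simp
      then show "p \<in> Z" using p(1) unfolding Z_def by blast
    qed
  qed
  have "insert a T \<subseteq> UNIV - D" unfolding T_def using aD by blast
  moreover have "finite (insert a T)" by simp
  ultimately have "card Z = card (UNIV - D) - card (insert a T)" unfolding ZZ by (rule card_Diff_subset[rotated])
  moreover have "card (insert a T) = 41" using cT aT card_insert_disjoint[of T a] finite[of T] by simp
  ultimately have cZ: "card Z = 30" using c71 by simp
  have "card {p. p \<notin> D \<and> lines_completed p D = 1} = 40" using cT unfolding T_def .
  moreover have "card {p. p \<notin> D \<and> lines_completed p D = 0} = 30" using cZ unfolding Z_def .
  ultimately show ?thesis using c71 aD lca by blast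
qed
end
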